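(* Let $(S,\delta)$ be a dihedral set and $(E,\delta_E)$ an inscribed polygon with sets $E_{\mathrm{sides}}$, $E_{\mathrm{chords}}$ and a choice of matching sides $s_c\in S_c$ ($c\in E_{\mathrm{chords}}$), and let $\psi:H^\bullet(\mathcal M_{0,E})\cong H^\bullet(\mathcal M_{0,S'})\to H^\bullet(\mathcal M_{0,S})$ be the associated pullback. Let $X$ be a monomial in the classes $\omega_{c}$ for chords $c$ of $(E,\delta_E)$, and denote also by $X$ the same monomial in $H^\bullet(\mathcal M_{0,S})$ (chords of $(E,\delta_E)$ being chords of $(S,\delta)$). Then $\psi(X)-X$ is a linear combination of monomials $\omega_{c_1}\wedge\cdots\wedge\omega_{c_k}$ (chords of $(S,\delta)$) in each of which some $c_i$ crosses some chord of $E_{\mathrm{chords}}$.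
   Context: Dihedral set: finite $S$, $|S|=n\ge3$, identified with the sides of an unoriented $n$-gon up to dihedral symmetry; a chord is a pair of non-consecutive vertices; two chords cross if they meet in the interior. An inscribed polygon $(E,\delta_E)$ in $(S,\delta)$ is a polygon whose vertices are vertices of $(S,\delta)$ and whose sides are either sides or chords of $(S,\delta)$; $E_{\mathrm{sides}}\subset E$ and $E_{\mathrm{chords}}\subset E$ are its sides which are sides, resp. chords, of $(S,\delta)$. Then $S\setminus E_{\mathrm{sides}}=\bigsqcup_{c\in E_{\mathrm{chords}}}S_c$, where $S_c$ is the (nonempty, dihedrally consecutive) set of sides of $(S,\delta)$ cut off from $E$ by $c$. Choosing $s_c\in S_c$ for each $c$, let $S'=E_{\mathrm{sides}}\sqcup\{s_c\}$ with induced dihedral structure $\delta'$; the bijection $E\to S'$ (identity on $E_{\mathrm{sides}}$, $c\mapsto s_c$) is a dihedral isomorphism, inducing $\mathcal M_{0,E}\cong\mathcal M_{0,S'}$ and a correspondence of chords; $\psi$ is this identification followed by pullback along the forgetful map $\mathcal M_{0,S}\to\mathcal M_{0,S'}$. Here $\mathcal M_{0,S}$ is the moduli space of $S$-indexed distinct points on $\mathbb P^1(\mathbb C)$ modulo $\mathrm{PGL}_2(\mathbb C)$, and $\omega_c=\frac1{2\pi i}d\log u_c$ with $u_c$ Brown's dihedral coordinate (sides labelled $1..n$ in dihedral order, $c$ joining the vertex between sides $i,i+1$ to that between $j,j+1$: $u_c=\frac{(z_i-z_{j+1})(z_{i+1}-z_j)}{(z_i-z_j)(z_{i+1}-z_{j+1})}$).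 *)

theory Defs
  imports "HOL-Analysis.Analysis" "HOL-Combinatorics.Permutations"
begin

text \<open>A dihedral set of size N is labelled by sides 0..N-1 in dihedral
order. Vertex i is the vertex between side i and side (i+1) mod N. A chord is
an (ordered representative of a) pair of non-consecutive vertices.
Points of the configuration space are maps z :: nat => complex, injective on
the labels; forms on M_{0,S} are pulled back to the configuration space and
evaluated on tangent vectors v :: nat => complex.\<close>

definition ucr :: "nat \<Rightarrow> (nat \<Rightarrow> complex) \<Rightarrow> nat \<Rightarrow> nat \<Rightarrow> complex" where
  "ucr N y i j =
     ((y i - y (Suc j mod N)) * (y (Suc i mod N) - y j)) /
     ((y i - y j) * (y (Suc i mod N) - y (Suc j mod N)))"

definition dlog_dir :: "((nat \<Rightarrow> complex) \<Rightarrow> complex) \<Rightarrow> (nat \<Rightarrow> complex) \<Rightarrow> (nat \<Rightarrow> complex) \<Rightarrow> complex" where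
  "dlog_dir f z v = deriv (\<lambda>t. f (\<lambda>i. z i + t * v i)) 0 / f z"

definition omega_of :: "((nat \<Rightarrow> complex) \<Rightarrow> complex) \<Rightarrow> (nat \<Rightarrow> complex) \<Rightarrow> (nat \<Rightarrow> complex) \<Rightarrow> complex" where
  "omega_of f z v = dlog_dir f z v / (2 * complex_of_real pi * \<i>)"

definition omega_chord :: "nat \<Rightarrow> nat \<times> nat \<Rightarrow> (nat \<Rightarrow> complex) \<Rightarrow> (nat \<Rightarrow> complex) \<Rightarrow> complex" where
  "omega_chord N c = omega_of (\<lambda>y. ucr N y (fst c) (snd c))"

definition wedge :: "((nat \<Rightarrow> complex) \<Rightarrow> (nat \<Rightarrow> complex) \<Rightarrow> complex) list
    \<Rightarrow> (nat \<Rightarrow> complex) \<Rightarrow> (nat \<Rightarrow> nat \<Rightarrow> complex) \<Rightarrow> complex" where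
  "wedge fs z vs =
     (\<Sum>p | p permutes {..<length fs}.
        of_int (sign p) * (\<Prod>i<length fs. (fs ! i) z (vs (p i))))"

definition conf :: "nat \<Rightarrow> (nat \<Rightarrow> complex) \<Rightarrow> bool" where
  "conf N z \<longleftrightarrow> inj_on z {..<N}"

definition is_chord :: "nat \<Rightarrow> nat \<times> nat \<Rightarrow> bool" where
  "is_chord N c \<longleftrightarrow> fst c < N \<and> snd c < N \<and> fst c \<noteq> snd c
     \<and> snd c \<noteq> Suc (fst c) mod N \<and> fst c \<noteq> Suc (snd c) mod N"

text \<open>x lies strictly inside the cyclic arc going forward from a to b.\<close>
definition strictly_between :: "nat \<Rightarrow> nat \<Rightarrow> nat \<Rightarrow> nat \<Rightarrow> bool" where
  "strictly_between N a b x \<longleftrightarrow>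
     0 < (x + N - a) mod N \<and> (x + N - a) mod N < (b + N - a) mod N"

definition crosses :: "nat \<Rightarrow> nat \<times> nat \<Rightarrow> nat \<times> nat \<Rightarrow> bool" where
  "crosses N c d \<longleftrightarrow> distinct [fst c, snd c, fst d, snd d] \<and>
     (strictly_between N (fst c) (snd c) (fst d) \<noteq> strictly_between N (fst c) (snd c) (snd d))"

text \<open>Inscribed polygon E given by its vertex set V (vertices of the n-gon).
vert V k is the k-th vertex of E in the dihedral order; E-vertex k = vert V k.
E-side k is the side of E between vert V (k-1 mod m) and vert V k.\<close>
definition vert :: "nat set \<Rightarrow> nat \<Rightarrow> nat" where
  "vert V k = sorted_list_of_set V ! k"

definition prevk :: "nat \<Rightarrow> nat \<Rightarrow> nat" where
  "prevk m k = (k + m - 1) mod m"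

text \<open>The set S_c of sides of the n-gon cut off by E-side k (if it is a chord),
resp. the singleton of E-side k itself if it is a side of the n-gon.\<close>
definition E_side_arc :: "nat \<Rightarrow> nat set \<Rightarrow> nat \<Rightarrow> nat set" where
  "E_side_arc n V k =
     (let a = vert V (prevk (card V) k); b = vert V k in
      {x. x < n \<and> 0 < (x + n - a) mod n \<and> (x + n - a) mod n \<le> (b + n - a) mod n})"

definition E_chords :: "nat \<Rightarrow> nat set \<Rightarrow> (nat \<times> nat) set" where
  "E_chords n V = {(vert V (prevk (card V) k), vert V k) | k.
      k < card V \<and> vert V k \<noteq> Suc (vert V (prevk (card V) k)) mod n}"

text \<open>psi(omega_c) for the chord c = (k,l) of E (in E's own labelling): identify
E with S' (E-side k |-> sel k), take Brown's form on M_{0,S'} and pull it back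
along the forgetful map (restriction of coordinates to S').\<close>
definition psi_omega :: "nat set \<Rightarrow> (nat \<Rightarrow> nat) \<Rightarrow> nat \<times> nat
    \<Rightarrow> (nat \<Rightarrow> complex) \<Rightarrow> (nat \<Rightarrow> complex) \<Rightarrow> complex" where
  "psi_omega V sel c = omega_of (\<lambda>y. ucr (card V) (\<lambda>j. y (sel j)) (fst c) (snd c))"

definition E_chord_in_S :: "nat set \<Rightarrow> nat \<times> nat \<Rightarrow> nat \<times> nat" where
  "E_chord_in_S V c = (vert V (fst c), vert V (snd c))"

end

theory Submission
  imports Defs
begin

definition offs :: "nat \<Rightarrow> nat \<Rightarrow> nat \<Rightarrow> nat" where "offs n c x = (x + n - c) mod n"
definition pt :: "nat \<Rightarrow> nat \<Rightarrow> nat \<Rightarrow> nat" where "pt n c k = (c + k) mod n"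
definition cyc :: "nat \<Rightarrow> nat \<Rightarrow> nat \<Rightarrow> bool" where
  "cyc a x b \<longleftrightarrow> (a<x \<and> x<b) \<or> (x<b \<and> b<a) \<or> (b<a \<and> a<x)"

lemma mod2n: "(y::nat) < 2*n \<Longrightarrow> y mod n = (if y < n then y else y - n)"
proof (cases "y < n")
  case False
  assume "y < 2*n"
  hence "y - n < n" using False by linarith
  thus ?thesis using False by (simp add: le_mod_geq)
qed simp

lemma offs_formula: "x < n \<Longrightarrow> c < n \<Longrightarrow> offs n c x = (if c \<le> x then x - c else x + n - c)"
  unfolding offs_def by (subst mod2n) auto

lemma pt_formula: "k < n \<Longrightarrow> c < n \<Longrightarrow> pt n c k = (if c + k < n then c + k else c + k - n)"
  unfolding pt_def by (subst mod2n) auto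

lemma offs_lt: "0 < n \<Longrightarrow> offs n c x < n" by (simp add: offs_def)
lemma pt_lt: "0 < n \<Longrightarrow> pt n c k < n" by (simp add: pt_def)

lemma offs_pt: "k < n \<Longrightarrow> c < n \<Longrightarrow> offs n c (pt n c k) = k"
  using pt_lt[of n c k] by (simp add: offs_formula pt_formula) linarith

lemma pt_offs: "x < n \<Longrightarrow> c < n \<Longrightarrow> pt n c (offs n c x) = x"
  using offs_lt[of n c x] by (simp add: offs_formula pt_formula)

lemma pt_Suc: "Suc (pt n c k) mod n = pt n c (Suc k)"
  unfolding pt_def by (simp add: mod_Suc_eq)

lemma offs_inj: "x < n \<Longrightarrow> y < n \<Longrightarrow> c < n \<Longrightarrow> offs n c x = offs n c y \<Longrightarrow> x = y"
  by (metis pt_offs)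

lemma offs_rebase: "a < n \<Longrightarrow> x < n \<Longrightarrow> c < n \<Longrightarrow>
   (x + n - a) mod n = (offs n c x + n - offs n c a) mod n"
  by (auto simp: offs_formula mod2n)

lemma modsub: "(Y::nat) < n \<Longrightarrow> A < n \<Longrightarrow> (Y + n - A) mod n = (if A \<le> Y then Y - A else Y + n - A)"
proof (cases "A \<le> Y")
  case True
  assume "Y < n" "A < n"
  have "(Y + n - A) mod n = ((Y - A) + n) mod n" using True by (simp add: add_diff_assoc2)
  also have "\<dots> = Y - A" using \<open>Y < n\<close> by simp
  finally show ?thesis using True by simp
qed simp

lemma cyc_mod: "A < n \<Longrightarrow> X < n \<Longrightarrow> B < n \<Longrightarrow> A \<noteq> B \<Longrightarrow>
  (0 < (X + n - A) mod n \<and> (X + n - A) mod n < (B + n - A) mod n) \<longleftrightarrow> cyc A X B"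
  unfolding cyc_def by (simp add: modsub split: if_split) (auto split: if_splits)

lemma sb_cyc: "a < n \<Longrightarrow> b < n \<Longrightarrow> x < n \<Longrightarrow> c < n \<Longrightarrow> a \<noteq> b \<Longrightarrow>
   strictly_between n a b x \<longleftrightarrow> cyc (offs n c a) (offs n c x) (offs n c b)"
  unfolding strictly_between_def
  apply (subst (1 2 3) offs_rebase[where c=c], simp_all)
  apply (rule cyc_mod) by (auto simp: offs_lt dest: offs_inj)

lemma offs_Suc: "x < n \<Longrightarrow> c < n \<Longrightarrow>
  offs n c (Suc x mod n) = (if Suc (offs n c x) < n then Suc (offs n c x) else 0)"
proof -
  assume a: "x < n" "c < n"
  have "Suc x mod n = (if Suc x < n then Suc x else 0)"
  proof (cases "Suc x < n")
    case False
    hence "Suc x = n" using a by simp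
    thus ?thesis by simp
  qed simp
  thus ?thesis using a by (auto simp: offs_formula)
qed

definition CR :: "(nat \<Rightarrow> complex) \<Rightarrow> nat \<Rightarrow> nat \<Rightarrow> nat \<Rightarrow> nat \<Rightarrow> complex" where
  "CR y a a' b b' = ((y a - y b') * (y a' - y b)) / ((y a - y b) * (y a' - y b'))"

lemma ucr_CR: "ucr N y i j = CR y i (Suc i mod N) j (Suc j mod N)"
  by (simp add: ucr_def CR_def)

lemma CRgen1:
  fixes A A' A'' B B' :: complex
  assumes "A' - B \<noteq> 0" "A' - B' \<noteq> 0"
  shows "((A-B')*(A'-B))/((A-B)*(A'-B')) * (((A'-B')*(A''-B))/((A'-B)*(A''-B'))) = ((A-B')*(A''-B))/((A-B)*(A''-B'))"
proof -
  have "((A-B')*(A'-B))/((A-B)*(A'-B')) * (((A'-B')*(A''-B))/((A'-B)*(A''-B')))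
     = (((A-B')*(A''-B))*((A'-B)*(A'-B'))) / (((A-B)*(A''-B'))*((A'-B)*(A'-B')))"
    by (simp add: mult_ac)
  also have "\<dots> = ((A-B')*(A''-B))/((A-B)*(A''-B'))"
    using assms by (intro nonzero_mult_divide_mult_cancel_right) simp
  finally show ?thesis .
qed

lemma CRgen2:
  fixes A A' B B' B'' :: complex
  assumes "A - B' \<noteq> 0" "A' - B' \<noteq> 0"
  shows "((A-B')*(A'-B))/((A-B)*(A'-B')) * (((A-B'')*(A'-B'))/((A-B')*(A'-B''))) = ((A-B'')*(A'-B))/((A-B)*(A'-B''))"
proof -
  have "((A-B')*(A'-B))/((A-B)*(A'-B')) * (((A-B'')*(A'-B'))/((A-B')*(A'-B'')))
     = (((A-B'')*(A'-B))*((A-B')*(A'-B'))) / (((A-B)*(A'-B''))*((A-B')*(A'-B')))"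
    by (simp add: mult_ac)
  also have "\<dots> = ((A-B'')*(A'-B))/((A-B)*(A'-B''))"
    using assms by (intro nonzero_mult_divide_mult_cancel_right) simp
  finally show ?thesis .
qed

lemma CR_mult1:
  assumes "y a' \<noteq> y b" "y a' \<noteq> y b'"
  shows "CR y a a' b b' * CR y a' a'' b b' = CR y a a'' b b'"
  unfolding CR_def using assms by (intro CRgen1) auto

lemma CR_mult2:
  assumes "y a \<noteq> y b'" "y a' \<noteq> y b'"
  shows "CR y a a' b b' * CR y a a' b' b'' = CR y a a' b b''"
  unfolding CR_def using assms by (intro CRgen2) auto

lemma CR_refl1: "y a \<noteq> y b \<Longrightarrow> y a \<noteq> y b' \<Longrightarrow> CR y a a b b' = 1"
  unfolding CR_def by (simp add: mult.commute)

lemma CR_refl2: "y a \<noteq> y b \<Longrightarrow> y a' \<noteq> y b \<Longrightarrow> CR y a a' b b = 1"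
  unfolding CR_def by (simp add: mult.commute)

lemma tele1:
  assumes "\<forall>a\<in>{\<alpha>..\<alpha>+k}. y (X a) \<noteq> y B \<and> y (X a) \<noteq> y B'"
  shows "CR y (X \<alpha>) (X (\<alpha>+k)) B B' = (\<Prod>a\<in>{\<alpha>..<\<alpha>+k}. CR y (X a) (X (Suc a)) B B')"
  using assms
proof (induction k)
  case 0
  then show ?case by (simp add: CR_refl1)
next
  case (Suc k)
  have IH: "CR y (X \<alpha>) (X (\<alpha>+k)) B B' = (\<Prod>a\<in>{\<alpha>..<\<alpha>+k}. CR y (X a) (X (Suc a)) B B')"
    using Suc by auto
  have "(\<Prod>a\<in>{\<alpha>..<\<alpha>+Suc k}. CR y (X a) (X (Suc a)) B B')
      = (\<Prod>a\<in>{\<alpha>..<\<alpha>+k}. CR y (X a) (X (Suc a)) B B') * CR y (X (\<alpha>+k)) (X (Suc (\<alpha>+k))) B B'"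
    by simp
  also have "\<dots> = CR y (X \<alpha>) (X (\<alpha>+Suc k)) B B'"
  proof -
    have "y (X (\<alpha>+k)) \<noteq> y B \<and> y (X (\<alpha>+k)) \<noteq> y B'" using Suc.prems by auto
    thus ?thesis unfolding IH[symmetric] by (simp add: CR_mult1)
  qed
  finally show ?case by simp
qed

lemma tele2:
  assumes "\<forall>b\<in>{\<gamma>..\<gamma>+k}. y A \<noteq> y (Y b) \<and> y A' \<noteq> y (Y b)"
  shows "CR y A A' (Y \<gamma>) (Y (\<gamma>+k)) = (\<Prod>b\<in>{\<gamma>..<\<gamma>+k}. CR y A A' (Y b) (Y (Suc b)))"
  using assms
proof (induction k)
  case 0
  then show ?case by (simp add: CR_refl2)
next
  case (Suc k)
  have IH: "CR y A A' (Y \<gamma>) (Y (\<gamma>+k)) = (\<Prod>b\<in>{\<gamma>..<\<gamma>+k}. CR y A A' (Y b) (Y (Suc b)))"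
    using Suc by auto
  have "(\<Prod>b\<in>{\<gamma>..<\<gamma>+Suc k}. CR y A A' (Y b) (Y (Suc b)))
      = (\<Prod>b\<in>{\<gamma>..<\<gamma>+k}. CR y A A' (Y b) (Y (Suc b))) * CR y A A' (Y (\<gamma>+k)) (Y (Suc (\<gamma>+k)))"
    by simp
  also have "\<dots> = CR y A A' (Y \<gamma>) (Y (\<gamma>+Suc k))"
  proof -
    have "y A \<noteq> y (Y (\<gamma>+k)) \<and> y A' \<noteq> y (Y (\<gamma>+k))" using Suc.prems by auto
    thus ?thesis unfolding IH[symmetric] by (simp add: CR_mult2)
  qed
  finally show ?case by simp
qed

lemma tele:
  assumes "\<alpha> \<le> \<beta>" "\<gamma> \<le> \<delta>"
    and "\<forall>a\<in>{\<alpha>..\<beta>}. \<forall>b\<in>{\<gamma>..\<delta>}. y (X a) \<noteq> y (Y b)"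
  shows "CR y (X \<alpha>) (X \<beta>) (Y \<gamma>) (Y \<delta>) =
     (\<Prod>a\<in>{\<alpha>..<\<beta>}. \<Prod>b\<in>{\<gamma>..<\<delta>}. CR y (X a) (X (Suc a)) (Y b) (Y (Suc b)))"
proof -
  obtain k l where k: "\<beta> = \<alpha> + k" and l: "\<delta> = \<gamma> + l" using assms le_Suc_ex by blast
  have "CR y (X \<alpha>) (X \<beta>) (Y \<gamma>) (Y \<delta>) = (\<Prod>a\<in>{\<alpha>..<\<beta>}. CR y (X a) (X (Suc a)) (Y \<gamma>) (Y \<delta>))"
    unfolding k using assms(3) k l by (intro tele1) auto
  also have "\<dots> = (\<Prod>a\<in>{\<alpha>..<\<beta>}. \<Prod>b\<in>{\<gamma>..<\<delta>}. CR y (X a) (X (Suc a)) (Y b) (Y (Suc b)))"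
    unfolding l using assms(3) k l by (intro prod.cong refl tele2) auto
  finally show ?thesis .
qed


lemma ev_inj:
  assumes "conf n z"
  shows "eventually (\<lambda>t. \<forall>a\<in>{..<n}. \<forall>b\<in>{..<n}. a \<noteq> b \<longrightarrow> z a + t * w a \<noteq> z b + t * w b) (nhds (0::complex))"
proof (intro eventually_ball_finite ballI finite_lessThan)
  fix a b assume ab: "a \<in> {..<n}" "b \<in> {..<n}"
  show "eventually (\<lambda>t. a \<noteq> b \<longrightarrow> z a + t * w a \<noteq> z b + t * w b) (nhds 0)"
  proof (cases "a = b")
    case False
    have ne: "z a - z b \<noteq> 0" using assms ab False unfolding conf_def inj_on_def by auto
    have "((\<lambda>t. z a + t * w a - (z b + t * w b)) \<longlongrightarrow> z a + 0 * w a - (z b + 0 * w b)) (at 0)"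
      by (intro tendsto_intros)
    hence "eventually (\<lambda>t. z a + t * w a - (z b + t * w b) \<noteq> 0) (at 0)"
      using ne by (intro tendsto_imp_eventually_ne) auto
    hence "eventually (\<lambda>t. z a + t * w a \<noteq> z b + t * w b) (nhds 0)"
      using ne unfolding eventually_nhds_conv_at by (auto elim: eventually_mono)
    thus ?thesis by (auto elim: eventually_mono)
  qed simp
qed

lemma dlog_prod:
  fixes P :: "'d set" and H :: "'d \<Rightarrow> (nat \<Rightarrow> complex) \<Rightarrow> complex"
  assumes fin: "finite P"
    and ev: "eventually (\<lambda>t. F (\<lambda>i. z i + t * w i) = (\<Prod>d\<in>P. H d (\<lambda>i. z i + t * w i))) (nhds 0)"
    and nz: "\<forall>d\<in>P. H d z \<noteq> 0"
    and df: "\<forall>d\<in>P. (\<lambda>t. H d (\<lambda>i. z i + t * w i)) field_differentiable at 0"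
  shows "dlog_dir F z w = (\<Sum>d\<in>P. dlog_dir (H d) z w)"
proof -
  define h where "h d t = H d (\<lambda>i. z i + t * w i)" for d t
  have z0: "(\<lambda>i. z i + 0 * w i) = z" by simp
  have h0: "h d 0 = H d z" for d unfolding h_def z0 ..
  have Fz: "F z = (\<Prod>d\<in>P. H d z)"
    using eventually_nhds_x_imp_x[OF ev] unfolding z0 .
  have "deriv (\<lambda>t. F (\<lambda>i. z i + t * w i)) 0 = deriv (\<lambda>t. \<Prod>d\<in>P. h d t) 0"
    using ev unfolding h_def by (intro deriv_cong_ev) auto
  also have "\<dots> = (\<Prod>d\<in>P. h d 0) * (\<Sum>d\<in>P. deriv (h d) 0 / h d 0)"
  proof (rule DERIV_imp_deriv)
    show "((\<lambda>t. \<Prod>d\<in>P. h d t) has_field_derivative (\<Prod>d\<in>P. h d 0) * (\<Sum>d\<in>P. deriv (h d) 0 / h d 0)) (at 0)"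
      using has_field_derivative_prod'[of P h 0 "\<lambda>d. deriv (h d) 0"] nz df
      unfolding h0 h_def[abs_def] by (auto simp: DERIV_deriv_iff_field_differentiable)
  qed
  finally have D: "deriv (\<lambda>t. F (\<lambda>i. z i + t * w i)) 0 = (\<Prod>d\<in>P. H d z) * (\<Sum>d\<in>P. deriv (h d) 0 / H d z)"
    unfolding h0 .
  have nz2: "(\<Prod>d\<in>P. H d z) \<noteq> 0" using nz fin by auto
  show ?thesis
    unfolding dlog_dir_def D Fz using nz2 by (simp add: h_def[abs_def])
qed

lemma ucr_diff:
  assumes "conf n z" "is_chord n (a,b)" "3 \<le> n"
  shows "(\<lambda>t. ucr n (\<lambda>i. z i + t * w i) a b) field_differentiable at 0"
    and "ucr n z a b \<noteq> 0"
proof -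
  have lt: "a < n" "b < n" "Suc a mod n < n" "Suc b mod n < n" using assms by (auto simp: is_chord_def)
  have d1: "a \<noteq> b" "Suc a mod n \<noteq> Suc b mod n" "a \<noteq> Suc b mod n" "Suc a mod n \<noteq> b"
    using assms(2) by (auto simp: is_chord_def mod_Suc split: if_splits)
  have zi: "\<And>x y. x < n \<Longrightarrow> y < n \<Longrightarrow> x \<noteq> y \<Longrightarrow> z x \<noteq> z y"
    using assms(1) unfolding conf_def inj_on_def by auto
  have ne: "z a - z b \<noteq> 0" "z (Suc a mod n) - z (Suc b mod n) \<noteq> 0"
     "z a - z (Suc b mod n) \<noteq> 0" "z (Suc a mod n) - z b \<noteq> 0"
    using zi[OF _ _ d1(1)] zi[OF _ _ d1(2)] zi[OF _ _ d1(3)] zi[OF _ _ d1(4)] lt by auto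
  show "(\<lambda>t. ucr n (\<lambda>i. z i + t * w i) a b) field_differentiable at 0"
    unfolding ucr_def using ne
    by (intro derivative_intros) auto
  show "ucr n z a b \<noteq> 0" unfolding ucr_def divide_eq_0_iff mult_eq_0_iff using ne by blast
qed


lemma wedge_expand:
  fixes G :: "'d \<Rightarrow> (nat \<Rightarrow> complex) \<Rightarrow> (nat \<Rightarrow> complex) \<Rightarrow> complex"
  assumes fin: "\<And>i. i < length fs \<Longrightarrow> finite (P i)"
    and dec: "\<And>i w. i < length fs \<Longrightarrow> (fs ! i) z w = (\<Sum>d\<in>P i. G d z w)"
  shows "wedge fs z vs = (\<Sum>\<sigma>\<in>PiE {..<length fs} P. wedge (map (\<lambda>i. G (\<sigma> i)) [0..<length fs]) z vs)"
proof -
  let ?k = "length fs"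
  let ?S = "{p. p permutes {..<?k}}"
  have "wedge fs z vs = (\<Sum>p\<in>?S. of_int (sign p) * (\<Prod>i<?k. \<Sum>d\<in>P i. G d z (vs (p i))))"
    unfolding wedge_def by (intro sum.cong refl arg_cong2[where f="(*)"] prod.cong) (auto simp: dec)
  also have "\<dots> = (\<Sum>p\<in>?S. of_int (sign p) * (\<Sum>\<sigma>\<in>PiE {..<?k} P. \<Prod>i<?k. G (\<sigma> i) z (vs (p i))))"
    by (intro sum.cong refl arg_cong2[where f="(*)"] prod_sum_PiE) (auto simp: fin)
  also have "\<dots> = (\<Sum>p\<in>?S. \<Sum>\<sigma>\<in>PiE {..<?k} P. of_int (sign p) * (\<Prod>i<?k. G (\<sigma> i) z (vs (p i))))"
    by (simp add: sum_distrib_left)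
  also have "\<dots> = (\<Sum>\<sigma>\<in>PiE {..<?k} P. \<Sum>p\<in>?S. of_int (sign p) * (\<Prod>i<?k. G (\<sigma> i) z (vs (p i))))"
    by (rule sum.swap)
  also have "\<dots> = (\<Sum>\<sigma>\<in>PiE {..<?k} P. wedge (map (\<lambda>i. G (\<sigma> i)) [0..<?k]) z vs)"
    unfolding wedge_def by (intro sum.cong refl arg_cong2[where f="(*)"] prod.cong) auto
  finally show ?thesis .
qed


lemma cross_off:
  assumes lt: "a < n" "b < n" "e1 < n" "e2 < n" "c < n"
    and dist: "distinct [offs n c a, offs n c b, offs n c e1, offs n c e2]"
    and cy: "cyc (offs n c a) (offs n c e1) (offs n c b) \<noteq> cyc (offs n c a) (offs n c e2) (offs n c b)"
  shows "crosses n (a,b) (e1,e2)"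
proof -
  have "distinct [a, b, e1, e2]" using dist by auto
  moreover have "a \<noteq> b" using dist by auto
  ultimately show ?thesis unfolding crosses_def using cy lt by (simp add: sb_cyc[where c=c])
qed

locale poly =
  fixes n :: nat and V :: "nat set"
  assumes n3: "3 \<le> n" and Vsub: "V \<subseteq> {..<n}" and m3: "3 \<le> card V"
begin

abbreviation "m \<equiv> card V"
abbreviation "v \<equiv> vert V"

lemma finV: "finite V" using Vsub finite_subset by blast

lemma len: "length (sorted_list_of_set V) = m" using finV by simp

lemma vV: "k < m \<Longrightarrow> v k \<in> V"
  unfolding vert_def using len finV by (metis nth_mem set_sorted_list_of_set)

lemma vlt: "k < m \<Longrightarrow> v k < n" using vV Vsub by auto

lemma vmono: "k < l \<Longrightarrow> l < m \<Longrightarrow> v k < v l"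
  unfolding vert_def using len sorted_wrt_nth_less[OF strict_sorted_list_of_set] by metis

lemma vmono_iff: "k < m \<Longrightarrow> l < m \<Longrightarrow> v k < v l \<longleftrightarrow> k < l"
  using vmono by (metis less_asym linorder_neqE_nat)

end

locale based = poly +
  fixes i :: nat
  assumes im: "i < card V"
begin

definition "k0 = prevk m i"
definition "c0 = Suc (v k0) mod n"
definition "Of x = offs n c0 x"
definition "idx t = (i + t) mod m"
definition "Gv t = Of (v (idx t))"

lemma m0: "0 < m" using m3 by simp
lemma n0: "0 < n" using n3 by simp

lemma k0_formula: "k0 = (if i = 0 then m - 1 else i - 1)"
  unfolding k0_def prevk_def using im m3 by (auto simp: mod2n)

lemma k0_lt: "k0 < m" using k0_formula im m3 by auto
lemma idx_lt: "idx t < m" unfolding idx_def using m0 by simp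
lemma c0_lt: "c0 < n" unfolding c0_def using n0 by simp
lemma Of_lt: "Of x < n" unfolding Of_def using offs_lt n0 by simp

lemma Of_formula: "x < n \<Longrightarrow> Of x = (if v k0 < x then x - Suc (v k0) else x + n - Suc (v k0))"
proof -
  assume x: "x < n"
  have vk: "v k0 < n" using vlt k0_lt by simp
  show ?thesis
  proof (cases "Suc (v k0) < n")
    case True
    hence "c0 = Suc (v k0)" unfolding c0_def by simp
    thus ?thesis unfolding Of_def using x True by (simp add: offs_formula)
  next
    case False
    hence "v k0 = n - 1" using vk by simp
    hence "c0 = 0" unfolding c0_def using n0 by simp
    thus ?thesis unfolding Of_def using x \<open>v k0 = n - 1\<close> by (simp add: offs_def)
  qed
qed

lemma idx_formula: "t < m \<Longrightarrow> idx t = (if i + t < m then i + t else i + t - m)"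
  unfolding idx_def using im by (auto simp: mod2n)

lemma Of_v: "k < m \<Longrightarrow> Of (v k) = (if k0 < k then v k - Suc (v k0) else v k + n - Suc (v k0))"
  using Of_formula[OF vlt] vmono_iff[OF k0_lt] by simp

lemma Gv_mono: assumes "t1 < t2" "t2 < m" shows "Gv t1 < Gv t2"
proof -
  define a where "a = idx t1"
  define b where "b = idx t2"
  have ab: "a < m" "b < m" unfolding a_def b_def by (auto simp: idx_lt)
  have A: "(k0 < a \<and> k0 < b \<and> a < b) \<or> (a \<le> k0 \<and> b \<le> k0 \<and> a < b) \<or> (k0 < a \<and> b \<le> k0)"
    unfolding a_def b_def using assms im by (simp add: idx_formula k0_formula) arith
  have vk: "v k0 < n" using vlt k0_lt by simp
  have va: "v a < n" "v b < n" using vlt ab by auto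
  have "Of (v a) < Of (v b)" using A
  proof (elim disjE conjE)
    assume "k0 < a" "k0 < b" "a < b"
    thus ?thesis using vmono[of a b] vmono[of k0 a] ab by (simp add: Of_v)
  next
    assume "a \<le> k0" "b \<le> k0" "a < b"
    thus ?thesis using vmono[of a b] ab vk by (simp add: Of_v)
  next
    assume "k0 < a" "b \<le> k0"
    thus ?thesis using va vk ab vmono[of k0 a] by (simp add: Of_v)
  qed
  thus ?thesis unfolding Gv_def a_def b_def .
qed

lemma Gv_mono_le: "t1 \<le> t2 \<Longrightarrow> t2 < m \<Longrightarrow> Gv t1 \<le> Gv t2"
  using Gv_mono by (cases "t1 = t2") (auto intro: less_imp_le)

lemma idx_last: "idx (m - 1) = k0"
  unfolding idx_def k0_def prevk_def using m0 by (simp add: add.commute)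

lemma Gv_last: "Gv (m - 1) = n - 1"
  unfolding Gv_def idx_last using Of_v[OF k0_lt] vlt[OF k0_lt] by simp

lemma Of_vk0: "Of (v k0) = n - 1" using Gv_last unfolding Gv_def idx_last .

lemma Gv_lt_last: "t < m - 1 \<Longrightarrow> Gv t < n - 1"
  using Gv_mono[of t "m - 1"] m0 Gv_last by simp

lemma prev_idx: "prevk m (idx (Suc t)) = idx t"
proof -
  have "prevk m (idx (Suc t)) = ((i + Suc t) mod m + (m - 1)) mod m"
    unfolding prevk_def idx_def using m0 by (simp add: add.commute)
  also have "\<dots> = (i + Suc t + (m - 1)) mod m" by (simp add: mod_add_left_eq)
  also have "i + Suc t + (m - 1) = (i + t) + m" using m0 by simp
  finally show ?thesis unfolding idx_def by simp
qed

lemma idx0: "idx 0 = i" unfolding idx_def using im by simp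
lemma prev_idx0: "prevk m (idx 0) = k0" unfolding idx0 k0_def ..

lemma Of_v_idx: "Of (v (idx t)) = Gv t" unfolding Gv_def ..

lemma N1: "(A::nat) < B \<Longrightarrow> B < n \<Longrightarrow> X < n \<Longrightarrow> 0 < (X + n - A) mod n \<Longrightarrow> (X + n - A) mod n \<le> (B + n - A) mod n
   \<Longrightarrow> A < X \<and> X \<le> B"
  by (simp add: modsub split: if_splits)

lemma N2: "B < n - 1 \<Longrightarrow> X < n \<Longrightarrow> 0 < (X + n - (n - 1)) mod n \<Longrightarrow> (X + n - (n - 1)) mod n \<le> (B + n - (n - 1)) mod n
   \<Longrightarrow> X \<le> B"
  using n0 by (simp add: modsub mod_Suc split: if_splits)

lemma arc_mem:
  assumes t: "t < m" and x: "x \<in> E_side_arc n V (idx t)"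
  shows "x < n \<and> (t = 0 \<or> Gv (t - 1) < Of x) \<and> Of x \<le> Gv t"
proof -
  define a where "a = v (prevk m (idx t))"
  define b where "b = v (idx t)"
  have xa: "x < n" "0 < (x + n - a) mod n" "(x + n - a) mod n \<le> (b + n - a) mod n"
    using x unfolding E_side_arc_def a_def b_def Let_def by auto
  have pl: "prevk m (idx t) < m" unfolding prevk_def using m0 by simp
  have alt: "a < n" "b < n" unfolding a_def b_def using vlt pl idx_lt by auto
  have R: "(y + n - a) mod n = (Of y + n - Of a) mod n" if "y < n" for y
    unfolding Of_def using offs_rebase[OF alt(1) that c0_lt] .
  have Ob: "Of b = Gv t" unfolding b_def Gv_def ..
  show ?thesis
  proof (cases t)
    case 0
    have Oa: "Of a = n - 1" unfolding a_def 0 prev_idx0 by (rule Of_vk0)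
    have "Gv 0 < n - 1" using Gv_lt_last m3 by simp
    hence "Of x \<le> Gv t" using N2[of "Of b" "Of x"] xa R[of x] R[of b] alt Oa Ob Of_lt 0 by simp
    thus ?thesis using xa 0 by simp
  next
    case (Suc t')
    have Oa: "Of a = Gv t'" unfolding a_def Suc prev_idx Gv_def ..
    have "Gv t' < Gv t" using Gv_mono[of t' t] Suc t by simp
    moreover have "Gv t < n" using Of_lt[of b] Ob by simp
    ultimately have "Gv t' < Of x \<and> Of x \<le> Gv t" using N1[of "Of a" "Of b" "Of x"] xa R[of x] R[of b] alt Oa Ob Of_lt by simp
    thus ?thesis using xa Suc by simp
  qed
qed

end

context based
begin

lemma cross_Of: "a < n \<Longrightarrow> b < n \<Longrightarrow> e1 < n \<Longrightarrow> e2 < n \<Longrightarrow> distinct [Of a, Of b, Of e1, Of e2] \<Longrightarrow>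
   cyc (Of a) (Of e1) (Of b) \<noteq> cyc (Of a) (Of e2) (Of b) \<Longrightarrow> crosses n (a,b) (e1,e2)"
  unfolding Of_def using c0_lt by (intro cross_off) auto

lemma Of_Suc: "x < n \<Longrightarrow> Of (Suc x mod n) = (if Suc (Of x) < n then Suc (Of x) else 0)"
  unfolding Of_def using c0_lt by (simp add: offs_Suc)

lemma echord_idx:
  assumes "Gv t + 1 < Gv (Suc t)" "Suc t < m"
  shows "(v (idx t), v (idx (Suc t))) \<in> E_chords n V"
proof -
  have "Gv (Suc t) < n" unfolding Gv_def by (rule Of_lt)
  have "Of (Suc (v (idx t)) mod n) = Suc (Gv t)"
    using Of_Suc[OF vlt[OF idx_lt]] assms \<open>Gv (Suc t) < n\<close> unfolding Gv_def by simp
  hence "v (idx (Suc t)) \<noteq> Suc (v (idx t)) mod n" using assms(1) unfolding Gv_def by auto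
  thus ?thesis unfolding E_chords_def using prev_idx[of t] idx_lt[of "Suc t"]
    by (intro CollectI exI[of _ "idx (Suc t)"]) simp
qed

lemma echord0:
  assumes "0 < Gv 0"
  shows "(v k0, v i) \<in> E_chords n V"
proof -
  have "Of (Suc (v k0) mod n) = 0"
    using Of_Suc[OF vlt[OF k0_lt]] Of_vk0 n0 by simp
  hence "v i \<noteq> Suc (v k0) mod n" using assms unfolding Gv_def idx0 by auto
  thus ?thesis unfolding E_chords_def using prev_idx0 im unfolding idx0 k0_def
    by (intro CollectI exI[of _ i]) simp
qed

lemma decomp:
  assumes sel: "\<forall>k<m. sel k \<in> E_side_arc n V k" and ch: "is_chord m (i, j)"
  shows "\<exists>P. finite P \<and> E_chord_in_S V (i,j) \<in> P \<and>
     (\<forall>d\<in>P. is_chord n d \<and> (d \<noteq> E_chord_in_S V (i,j) \<longrightarrow> (\<exists>e\<in>E_chords n V. crosses n d e))) \<and>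
     (\<forall>z w. conf n z \<longrightarrow> psi_omega V sel (i,j) z w = (\<Sum>d\<in>P. omega_chord n d z w))"
proof -
  have jm: "j < m" and ij: "i \<noteq> j" "j \<noteq> Suc i mod m" "i \<noteq> Suc j mod m"
    using ch unfolding is_chord_def by auto
  define tj where "tj = (if i \<le> j then j - i else j + m - i)"
  have tj_lt: "tj < m" using im jm by (auto simp: tj_def)
  have idx_tj: "idx tj = j" unfolding idx_def tj_def using im jm by (auto simp: mod2n)
  have idx_Stj: "idx (Suc tj) = Suc j mod m"
    by (metis idx_def idx_tj mod_Suc_eq add_Suc_right)
  have idx1: "idx 1 = Suc i mod m" unfolding idx_def by simp
  have "tj \<noteq> 0" using idx_tj idx0 ij(1) by metis
  moreover have "tj \<noteq> 1" using idx_tj idx1 ij(2) by metis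
  ultimately have tj2: "2 \<le> tj" by simp
  have "idx m = i" unfolding idx_def using im by simp
  hence "Suc tj \<noteq> m" using idx_Stj ij by auto
  hence tjm: "Suc tj < m" using tj_lt by simp
  define p where "p = sel i"
  define q where "q = sel (Suc i mod m)"
  define r where "r = sel j"
  define s where "s = sel (Suc j mod m)"
  have hp: "p < n" "Of p \<le> Gv 0"
    using arc_mem[of 0 p] sel im m0 unfolding p_def idx0 by auto
  have hq: "q < n" "Gv 0 < Of q" "Of q \<le> Gv 1"
    using arc_mem[of 1 q] sel m3 unfolding q_def idx1 by auto
  have hr: "r < n" "Gv (tj - 1) < Of r" "Of r \<le> Gv tj"
    using arc_mem[of tj r] sel tj_lt tj2 jm unfolding r_def idx_tj by auto
  have hs: "s < n" "Gv tj < Of s" "Of s \<le> Gv (Suc tj)"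
    using arc_mem[of "Suc tj" s] sel tjm m0 unfolding s_def idx_Stj by auto
  have G1: "Gv 1 \<le> Gv (tj - 1)" using Gv_mono_le tj2 tj_lt by simp
  have GL: "Gv (Suc tj) \<le> n - 1" using Gv_mono_le[of "Suc tj" "m - 1"] tjm Gv_last by simp
  define \<alpha> where "\<alpha> = Of p"
  define \<beta> where "\<beta> = Of q"
  define \<gamma> where "\<gamma> = Of r"
  define \<delta> where "\<delta> = Of s"
  define D where "D k = pt n c0 k" for k
  have Dlt: "D k < n" for k unfolding D_def using pt_lt n0 by simp
  have OfD: "k < n \<Longrightarrow> Of (D k) = k" for k unfolding D_def Of_def using c0_lt by (simp add: offs_pt)
  have DOf: "x < n \<Longrightarrow> D (Of x) = x" for x unfolding D_def Of_def using c0_lt by (simp add: pt_offs)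
  have DSuc: "Suc (D k) mod n = D (Suc k)" for k unfolding D_def by (rule pt_Suc)
  have Dinj: "a < n \<Longrightarrow> b < n \<Longrightarrow> D a = D b \<Longrightarrow> a = b" for a b by (metis OfD)
  have vD: "v (idx t) = D (Gv t)" for t unfolding Gv_def using DOf vlt idx_lt by simp
  have ord: "\<alpha> \<le> Gv 0" "Gv 0 < \<beta>" "\<beta> < \<gamma>" "\<gamma> \<le> Gv tj" "Gv tj < \<delta>" "\<delta> \<le> n - 1"
    "Gv 1 < \<gamma>" "Gv (tj - 1) < \<gamma>" "Gv 0 < Gv (tj - 1)" "\<beta> \<le> Gv 1"
    using hp hq hr hs G1 GL Gv_mono[of 0 "tj - 1"] tj2 tj_lt
    unfolding \<alpha>_def \<beta>_def \<gamma>_def \<delta>_def by auto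
  define R where "R = {\<alpha>..<\<beta>} \<times> {\<gamma>..<\<delta>}"
  define f where "f ab = (D (fst ab), D (snd ab))" for ab :: "nat \<times> nat"
  define P where "P = f ` R"
  have finR: "finite R" unfolding R_def by simp
  have injf: "inj_on f R"
  proof (rule inj_onI)
    fix x y assume "x \<in> R" "y \<in> R" "f x = f y"
    thus "x = y" unfolding R_def f_def using ord
      by (auto intro!: prod_eqI dest!: Dinj[rotated 2])
  qed
  have Ech: "E_chord_in_S V (i,j) = f (Gv 0, Gv tj)"
    unfolding E_chord_in_S_def f_def using vD[of 0] vD[of tj] idx0 idx_tj by simp
  have Rmem: "(Gv 0, Gv tj) \<in> R" unfolding R_def using ord by auto
  show ?thesis
  proof (intro exI[of _ P] conjI)
    show "finite P" unfolding P_def using finR by simp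
    show "E_chord_in_S V (i, j) \<in> P" unfolding P_def Ech using Rmem by simp
    show "\<forall>d\<in>P. is_chord n d \<and> (d \<noteq> E_chord_in_S V (i, j) \<longrightarrow> (\<exists>e\<in>E_chords n V. crosses n d e))"
    proof
      fix d assume "d \<in> P"
      then obtain a b where ab: "(a,b) \<in> R" and d: "d = (D a, D b)" unfolding P_def f_def by auto
      have abr: "\<alpha> \<le> a" "a < \<beta>" "\<gamma> \<le> b" "b < \<delta>" using ab unfolding R_def by auto
      have an: "a < n" "b < n" "Suc a < n" "Suc b < n" using abr ord by auto
      have chd: "is_chord n d"
        unfolding d is_chord_def fst_conv snd_conv DSuc using abr ord an Dlt
        by (auto dest!: Dinj[rotated 2])
      have Oa: "Of (D a) = a" "Of (D b) = b" using OfD an by auto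
      have crs: "\<exists>e\<in>E_chords n V. crosses n d e" if ne: "d \<noteq> E_chord_in_S V (i, j)"
      proof -
        have "a \<noteq> Gv 0 \<or> b \<noteq> Gv tj" using ne unfolding Ech d f_def by auto
        hence "a < Gv 0 \<or> Gv 0 < a \<or> (a = Gv 0 \<and> b < Gv tj) \<or> (a = Gv 0 \<and> Gv tj < b)" by auto
        thus ?thesis
        proof (elim disjE conjE)
          assume a0: "a < Gv 0"
          have e: "(v k0, v i) \<in> E_chords n V" using a0 by (intro echord0) simp
          have Ov: "Of (v k0) = n - 1" "Of (v i) = Gv 0" using Of_vk0 Of_v_idx[of 0] idx0 by auto
          have "crosses n (D a, D b) (v k0, v i)"
            using a0 abr ord an Dlt Oa Ov vlt[OF k0_lt] vlt[OF im]
            by (intro cross_Of) (auto simp: cyc_def)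
          thus ?thesis using e d by blast
        next
          assume a0: "Gv 0 < a"
          have G01: "Gv 0 + 1 < Gv (Suc 0)" using a0 abr ord by simp
          have e: "(v (idx 0), v (idx (Suc 0))) \<in> E_chords n V" using G01 m3 by (intro echord_idx) auto
          have Ov: "Of (v (idx 0)) = Gv 0" "Of (v (idx (Suc 0))) = Gv 1" using Of_v_idx by auto
          have "crosses n (D a, D b) (v (idx 0), v (idx (Suc 0)))"
            using a0 abr ord an Dlt Oa Ov vlt[OF idx_lt]
            by (intro cross_Of) (auto simp: cyc_def)
          thus ?thesis using e d by blast
        next
          assume a0: "a = Gv 0" and b0: "b < Gv tj"
          have tt: "Suc (tj - 1) = tj" using tj2 by simp
          have G01: "Gv (tj - 1) + 1 < Gv (Suc (tj - 1))" using b0 abr ord tt by simp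
          have e: "(v (idx (tj - 1)), v (idx (Suc (tj - 1)))) \<in> E_chords n V"
            using G01 tj_lt tt by (intro echord_idx) auto
          have Ov: "Of (v (idx (tj - 1))) = Gv (tj - 1)" "Of (v (idx (Suc (tj - 1)))) = Gv tj"
            using Of_v_idx tt by auto
          have "crosses n (D a, D b) (v (idx (tj - 1)), v (idx (Suc (tj - 1))))"
            using a0 b0 abr ord an Dlt Oa Ov vlt[OF idx_lt]
            by (intro cross_Of) (auto simp: cyc_def)
          thus ?thesis using e d by blast
        next
          assume a0: "a = Gv 0" and b0: "Gv tj < b"
          have G01: "Gv tj + 1 < Gv (Suc tj)" using b0 abr ord hs unfolding \<delta>_def by simp
          have e: "(v (idx tj), v (idx (Suc tj))) \<in> E_chords n V"
            using G01 tjm by (intro echord_idx) auto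
          have Ov: "Of (v (idx tj)) = Gv tj" "Of (v (idx (Suc tj))) = Gv (Suc tj)"
            using Of_v_idx by auto
          have "crosses n (D a, D b) (v (idx tj), v (idx (Suc tj)))"
            using a0 b0 abr ord an Dlt Oa Ov vlt[OF idx_lt] hs unfolding \<delta>_def
            by (intro cross_Of) (auto simp: cyc_def)
          thus ?thesis using e d by blast
        qed
      qed
      show "is_chord n d \<and> (d \<noteq> E_chord_in_S V (i, j) \<longrightarrow> (\<exists>e\<in>E_chords n V. crosses n d e))"
        using chd crs by blast
    qed
    show "\<forall>z w. conf n z \<longrightarrow> psi_omega V sel (i, j) z w = (\<Sum>d\<in>P. omega_chord n d z w)"
    proof (intro allI impI)
      fix z w assume z: "conf n z"
      define F where "F y = CR y (D \<alpha>) (D \<beta>) (D \<gamma>) (D \<delta>)" for y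
      define H where "H ab y = ucr n y (D (fst ab)) (D (snd ab))" for ab :: "nat \<times> nat" and y
      have pe: "D \<alpha> = p" "D \<beta> = q" "D \<gamma> = r" "D \<delta> = s"
        unfolding \<alpha>_def \<beta>_def \<gamma>_def \<delta>_def using DOf hp hq hr hs by auto
      have psiF: "psi_omega V sel (i, j) = omega_of F"
        unfolding psi_omega_def F_def pe ucr_CR p_def q_def r_def s_def by (simp add: CR_def)
      have chR: "is_chord n (f ab)" if "ab \<in> R" for ab
      proof -
        have "f ab \<in> P" unfolding P_def using that by simp
        thus ?thesis using \<open>\<forall>d\<in>P. is_chord n d \<and> _\<close> by blast
      qed
      have ev: "eventually (\<lambda>t. F (\<lambda>k. z k + t * w k) = (\<Prod>ab\<in>R. H ab (\<lambda>k. z k + t * w k))) (nhds 0)"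
        using ev_inj[OF z, of w]
      proof (rule eventually_mono)
        fix t :: complex
        define y where "y k = z k + t * w k" for k
        assume "\<forall>a\<in>{..<n}. \<forall>b\<in>{..<n}. a \<noteq> b \<longrightarrow> z a + t * w a \<noteq> z b + t * w b"
        hence yi: "a < n \<Longrightarrow> b < n \<Longrightarrow> a \<noteq> b \<Longrightarrow> y a \<noteq> y b" for a b unfolding y_def by auto
        have cond: "\<forall>a\<in>{\<alpha>..\<beta>}. \<forall>b\<in>{\<gamma>..\<delta>}. y (D a) \<noteq> y (D b)"
        proof (intro ballI)
          fix a b assume "a \<in> {\<alpha>..\<beta>}" "b \<in> {\<gamma>..\<delta>}"
          hence "a \<noteq> b" "a < n" "b < n" using ord by auto
          hence "D a \<noteq> D b" using Dinj by blast
          thus "y (D a) \<noteq> y (D b)" using yi Dlt by blast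
        qed
        have "F y = (\<Prod>a\<in>{\<alpha>..<\<beta>}. \<Prod>b\<in>{\<gamma>..<\<delta>}. CR y (D a) (D (Suc a)) (D b) (D (Suc b)))"
          unfolding F_def using ord cond by (intro tele) auto
        also have "\<dots> = (\<Prod>a\<in>{\<alpha>..<\<beta>}. \<Prod>b\<in>{\<gamma>..<\<delta>}. H (a,b) y)"
          unfolding H_def ucr_CR DSuc by simp
        also have "\<dots> = (\<Prod>ab\<in>R. H ab y)" unfolding R_def by (simp add: prod.cartesian_product)
        finally show "F (\<lambda>k. z k + t * w k) = (\<Prod>ab\<in>R. H ab (\<lambda>k. z k + t * w k))"
          unfolding y_def[abs_def] .
      qed
      have nz: "\<forall>ab\<in>R. H ab z \<noteq> 0" and df: "\<forall>ab\<in>R. (\<lambda>t. H ab (\<lambda>k. z k + t * w k)) field_differentiable at 0"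
        using chR ucr_diff[OF z _ n3] unfolding H_def f_def by auto
      have "dlog_dir F z w = (\<Sum>ab\<in>R. dlog_dir (H ab) z w)"
        by (rule dlog_prod[OF finR ev nz df])
      hence "omega_of F z w = (\<Sum>ab\<in>R. omega_chord n (f ab) z w)"
        unfolding omega_of_def omega_chord_def H_def f_def by (simp add: sum_divide_distrib)
      also have "\<dots> = (\<Sum>d\<in>P. omega_chord n d z w)"
        unfolding P_def using injf by (simp add: sum.reindex)
      finally show "psi_omega V sel (i, j) z w = (\<Sum>d\<in>P. omega_chord n d z w)" unfolding psiF .
    qed
  qed
qed

end

lemma psi_decomp:
  assumes "3 \<le> n" "V \<subseteq> {..<n}" "3 \<le> card V" "\<forall>k<card V. sel k \<in> E_side_arc n V k"
    "is_chord (card V) c"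
  shows "\<exists>P. finite P \<and> E_chord_in_S V c \<in> P \<and>
     (\<forall>d\<in>P. is_chord n d \<and> (d \<noteq> E_chord_in_S V c \<longrightarrow> (\<exists>e\<in>E_chords n V. crosses n d e))) \<and>
     (\<forall>z w. conf n z \<longrightarrow> psi_omega V sel c z w = (\<Sum>d\<in>P. omega_chord n d z w))"
proof -
  obtain i j where c: "c = (i, j)" by fastforce
  have "i < card V" using assms(5) unfolding c is_chord_def by simp
  then interpret based n V i using assms(1-3) by unfold_locales
  show ?thesis unfolding c using decomp assms(4,5) unfolding c by blast
qed

theorem lemma4:
  fixes n :: nat and V :: "nat set" and sel :: "nat \<Rightarrow> nat"
    and cs :: "(nat \<times> nat) list"
  assumes "3 \<le> n"
    and "V \<subseteq> {..<n}" and "3 \<le> card V"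
    and "\<forall>k < card V. sel k \<in> E_side_arc n V k"
    and "\<forall>c \<in> set cs. is_chord (card V) c"
  shows "\<exists>(ds :: (nat \<times> nat) list list) (a :: nat \<Rightarrow> complex).
     (\<forall>d \<in> set ds. length d = length cs \<and> (\<forall>c \<in> set d. is_chord n c)
        \<and> (\<exists>c \<in> set d. \<exists>e \<in> E_chords n V. crosses n c e)) \<and>
     (\<forall>z vs. conf n z \<longrightarrow>
        wedge (map (psi_omega V sel) cs) z vs
          - wedge (map (\<lambda>c. omega_chord n (E_chord_in_S V c)) cs) z vs
        = (\<Sum>i < length ds. a i * wedge (map (omega_chord n) (ds ! i)) z vs))"
proof -
  define Q where "Q c P \<longleftrightarrow> finite P \<and> E_chord_in_S V c \<in> P \<and>
     (\<forall>d\<in>P. is_chord n d \<and> (d \<noteq> E_chord_in_S V c \<longrightarrow> (\<exists>e\<in>E_chords n V. crosses n d e))) \<and>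
     (\<forall>z w. conf n z \<longrightarrow> psi_omega V sel c z w = (\<Sum>d\<in>P. omega_chord n d z w))" for c P
  have "\<forall>c\<in>set cs. \<exists>P. Q c P" unfolding Q_def using psi_decomp[OF assms(1-4)] assms(5) by blast
  then obtain PP where PP: "\<forall>c\<in>set cs. Q c (PP c)" by metis
  define k where "k = length cs"
  define P where "P i = PP (cs ! i)" for i
  have QP: "Q (cs ! i) (P i)" if "i < k" for i using PP that unfolding P_def k_def by auto
  define A where "A = PiE {..<k} P"
  define \<sigma>0 where "\<sigma>0 = restrict (\<lambda>i. E_chord_in_S V (cs ! i)) {..<k}"
  have s0A: "\<sigma>0 \<in> A" unfolding A_def \<sigma>0_def using QP unfolding Q_def by auto
  have finA: "finite A" unfolding A_def using QP unfolding Q_def by (intro finite_PiE) auto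
  obtain xs where xs: "distinct xs" "set xs = A - {\<sigma>0}"
    using finite_distinct_list[of "A - {\<sigma>0}"] finA by auto
  define ds where "ds = map (\<lambda>\<sigma>. map \<sigma> [0..<k]) xs"
  define W where "W \<sigma> z vs = wedge (map (\<lambda>i. omega_chord n (\<sigma> i)) [0..<k]) z vs" for \<sigma> z vs
  show ?thesis
  proof (intro exI[of _ ds] exI[of _ "\<lambda>_. 1"] conjI)
   show "\<forall>d \<in> set ds. length d = length cs \<and> (\<forall>c \<in> set d. is_chord n c)
        \<and> (\<exists>c \<in> set d. \<exists>e \<in> E_chords n V. crosses n c e)"
   proof
    fix d assume "d \<in> set ds"
    then obtain \<sigma> where \<sigma>: "\<sigma> \<in> A" "\<sigma> \<noteq> \<sigma>0" and d: "d = map \<sigma> [0..<k]"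
      unfolding ds_def using xs by auto
    have L: "length d = length cs" unfolding d k_def by simp
    have C: "\<forall>c\<in>set d. is_chord n c"
      unfolding d using \<sigma>(1) QP unfolding A_def Q_def by (auto simp: PiE_iff)
    obtain i where i: "i < k" "\<sigma> i \<noteq> \<sigma>0 i"
      using \<sigma> s0A unfolding A_def by (metis PiE_ext lessThan_iff)
    have "\<sigma> i \<in> P i" using \<sigma>(1) i unfolding A_def by auto
    moreover have "\<sigma> i \<noteq> E_chord_in_S V (cs ! i)" using i unfolding \<sigma>0_def by auto
    ultimately have "\<exists>e\<in>E_chords n V. crosses n (\<sigma> i) e" using QP[OF i(1)] unfolding Q_def by auto
    moreover have "\<sigma> i \<in> set d" unfolding d using i by auto
    ultimately have "\<exists>c\<in>set d. \<exists>e\<in>E_chords n V. crosses n c e" by blast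
    thus "length d = length cs \<and> (\<forall>c \<in> set d. is_chord n c)
        \<and> (\<exists>c \<in> set d. \<exists>e \<in> E_chords n V. crosses n c e)" using L C by blast
   qed
  next
   show "\<forall>z vs. conf n z \<longrightarrow>
        wedge (map (psi_omega V sel) cs) z vs
          - wedge (map (\<lambda>c. omega_chord n (E_chord_in_S V c)) cs) z vs
        = (\<Sum>i < length ds. 1 * wedge (map (omega_chord n) (ds ! i)) z vs)"
   proof (intro allI impI)
    fix z vs assume z: "conf n z"
    have E: "wedge (map (psi_omega V sel) cs) z vs = (\<Sum>\<sigma>\<in>PiE {..<length (map (psi_omega V sel) cs)} P.
        wedge (map (\<lambda>i. omega_chord n (\<sigma> i)) [0..<length (map (psi_omega V sel) cs)]) z vs)"
      by (rule wedge_expand) (use QP z in \<open>auto simp: Q_def k_def\<close>)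
    have "wedge (map (psi_omega V sel) cs) z vs = (\<Sum>\<sigma>\<in>A. W \<sigma> z vs)"
      unfolding A_def W_def k_def E by simp
    also have "\<dots> = W \<sigma>0 z vs + (\<Sum>\<sigma>\<in>A - {\<sigma>0}. W \<sigma> z vs)"
      using s0A finA by (simp add: sum.remove)
    also have "W \<sigma>0 z vs = wedge (map (\<lambda>c. omega_chord n (E_chord_in_S V c)) cs) z vs"
      unfolding W_def by (rule arg_cong[where f="\<lambda>l. wedge l z vs"]) (auto simp: \<sigma>0_def k_def intro!: nth_equalityI)
    also have "(\<Sum>\<sigma>\<in>A - {\<sigma>0}. W \<sigma> z vs) = sum_list (map (\<lambda>\<sigma>. W \<sigma> z vs) xs)"
      using xs by (simp add: sum_list_distinct_conv_sum_set)
    also have "\<dots> = (\<Sum>i<length ds. 1 * wedge (map (omega_chord n) (ds ! i)) z vs)"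
      unfolding sum_list_sum_nth ds_def W_def by (simp add: atLeast0LessThan comp_def)
    finally show "wedge (map (psi_omega V sel) cs) z vs - wedge (map (\<lambda>c. omega_chord n (E_chord_in_S V c)) cs) z vs
        = (\<Sum>i<length ds. 1 * wedge (map (omega_chord n) (ds ! i)) z vs)" by simp
   qed
  qed
qed

end
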